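(* Let $\alpha,\beta,\gamma\in\mathbb{Z}[i]$ satisfy $\alpha^2+\beta^2+\gamma^2=0$, $\alpha\beta\gamma\neq0$ and $\gcd(\alpha,\beta,\gamma)\in U$. Then $\alpha\beta\gamma\equiv0\pmod{(1+i)^2}$.
   Context: $\mathbb{Z}[i]$ is the ring of Gaussian integers, $U=\{1,-1,i,-i\}$ its unit group; $\gcd(\alpha,\beta,\gamma)\in U$ means the three have no common non-unit divisor. *)

theory Defs
  imports Complex_Main
begin

definition gauss_ints :: "complex set" where
  "gauss_ints = {z. Re z \<in> \<int> \<and> Im z \<in> \<int>}"

definition gdvd :: "complex \<Rightarrow> complex \<Rightarrow> bool" where
  "gdvd a b \<longleftrightarrow> (\<exists>k\<in>gauss_ints. b = a * k)"

definition gunits :: "complex set" where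
  "gunits = {1, -1, \<i>, -\<i>}"

text \<open>gcd(a,b,c) in U: every common divisor in Z[i] is a unit.\<close>
definition gcoprime3 :: "complex \<Rightarrow> complex \<Rightarrow> complex \<Rightarrow> bool" where
  "gcoprime3 a b c \<longleftrightarrow>
     (\<forall>d\<in>gauss_ints. gdvd d a \<and> gdvd d b \<and> gdvd d c \<longrightarrow> d \<in> gunits)"

end

theory Submission
  imports Defs
begin

lemma sq_mod4: "(x::int)^2 mod 4 = (if even x then 0 else 1)"
proof (cases "even x")
  case True then obtain k where "x = 2*k" by blast
  then show ?thesis by (simp add: power2_eq_square)
next
  case False then obtain k where "x = 2*k+1" using oddE by blast
  then have "x^2 = 4*(k*k+k) + 1" by (simp add: power2_eq_square algebra_simps)
  moreover have "(4*(k*k+k) + 1) mod 4 = (1::int)" by presburger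
  ultimately show ?thesis using False by simp
qed

lemma boolcore:
  fixes pa pb pc pd pe pf :: bool
  assumes "(((if pa then 0 else 1) + (if pc then 0 else 1) + (if pe then 0 else 1)) mod 4::int)
         = ((if pb then 0 else 1) + (if pd then 0 else 1) + (if pf then 0 else 1)) mod 4"
    and "((pa \<or> pb) = (pc \<or> pd)) = (pe \<or> pf)"
    and "\<not>((pa=pb) \<and> (pc=pd) \<and> (pe=pf))"
  shows "((((pa \<or> pc \<or> pe) = (pa \<or> pd \<or> pf)) = (pb \<or> pc \<or> pf)) = (pb \<or> pd \<or> pe))
       \<and> ((((pa \<or> pc \<or> pf) = (pa \<or> pd \<or> pe)) = (pb \<or> pc \<or> pe)) = (pb \<or> pd \<or> pf))"
  using assms
  by (cases pa; cases pb; cases pc; cases pd; cases pe; cases pf; simp)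

lemma mod3: "((x::int) mod 4 + y mod 4 + z mod 4) mod 4 = (x+y+z) mod 4"
proof -
  have "((x::int) mod 4 + y mod 4 + z mod 4) mod 4 = ((x mod 4 + y mod 4) mod 4 + z mod 4) mod 4"
    by (rule mod_add_left_eq[symmetric])
  also have "\<dots> = ((x + y) mod 4 + z mod 4) mod 4" by (simp only: mod_add_eq)
  also have "\<dots> = (x + y + z) mod 4" by (rule mod_add_eq)
  finally show ?thesis .
qed

lemma intcore:
  fixes a b c d e f :: int
  assumes r: "a^2-b^2+c^2-d^2+e^2-f^2 = 0" and i: "a*b+c*d+e*f = 0"
    and nc: "\<not>(even(a+b) \<and> even(c+d) \<and> even(e+f))"
  shows "even (a*c*e - a*d*f - b*c*f - b*d*e) \<and> even (a*c*f + a*d*e + b*c*e - b*d*f)"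
proof -
  have "a^2+c^2+e^2 = b^2+d^2+f^2" using r by simp
  hence "(a^2+c^2+e^2) mod 4 = (b^2+d^2+f^2) mod 4" by simp
  hence m: "((a^2 mod 4)+(c^2 mod 4)+(e^2 mod 4)) mod 4 = ((b^2 mod 4)+(d^2 mod 4)+(f^2 mod 4)) mod 4"
    by (simp only: mod3)
  have ie: "even (a*b+c*d+e*f)" using i by simp
  show ?thesis
    using m ie nc
    unfolding sq_mod4 even_add even_diff even_mult_iff disj_assoc
    by (rule boolcore)
qed

lemma gi_obtain:
  assumes "z \<in> gauss_ints"
  obtains a b :: int where "z = Complex (of_int a) (of_int b)"
proof -
  from assms obtain a where a: "Re z = of_int a" unfolding gauss_ints_def by (auto elim: Ints_cases)
  from assms obtain b where b: "Im z = of_int b" unfolding gauss_ints_def by (auto elim: Ints_cases)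
  show ?thesis using that[of a b] a b by (simp add: complex_eq_iff)
qed

lemma gi_mk: "Complex (of_int a) (of_int b) \<in> gauss_ints"
  unfolding gauss_ints_def by simp

lemma dvd1i:
  fixes a b :: int
  assumes "even (a+b)"
  shows "gdvd (1 + \<i>) (Complex (of_int a) (of_int b))"
proof -
  obtain p where p: "a + b = 2*p" using assms by blast
  define q where "q = b - p"
  have "Complex (of_int a) (of_int b) = (1 + \<i>) * Complex (of_int p) (of_int q)"
    using p by (simp add: complex_eq_iff q_def)
  then show ?thesis unfolding gdvd_def using gi_mk by blast
qed

theorem lemma4p1:
  fixes \<alpha> \<beta> \<gamma> :: complex
  assumes "\<alpha> \<in> gauss_ints" and "\<beta> \<in> gauss_ints" and "\<gamma> \<in> gauss_ints"
    and "\<alpha>^2 + \<beta>^2 + \<gamma>^2 = 0"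
    and "\<alpha> * \<beta> * \<gamma> \<noteq> 0"
    and "gcoprime3 \<alpha> \<beta> \<gamma>"
  shows "gdvd ((1 + \<i>)^2) (\<alpha> * \<beta> * \<gamma>)"
proof -
  obtain a b where A: "\<alpha> = Complex (of_int a) (of_int b)" using gi_obtain assms(1) by blast
  obtain c d where B: "\<beta> = Complex (of_int c) (of_int d)" using gi_obtain assms(2) by blast
  obtain e f where C: "\<gamma> = Complex (of_int e) (of_int f)" using gi_obtain assms(3) by blast
  have eq: "Re (\<alpha>^2 + \<beta>^2 + \<gamma>^2) = 0" "Im (\<alpha>^2 + \<beta>^2 + \<gamma>^2) = 0"
    using assms(4) by simp_all
  have r: "a^2-b^2+c^2-d^2+e^2-f^2 = 0"
  proof -
    have "real_of_int (a^2-b^2+c^2-d^2+e^2-f^2) = 0"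
      using eq(1) unfolding A B C by (simp add: power2_eq_square)
    then show ?thesis by (simp only: of_int_eq_0_iff)
  qed
  have i: "a*b+c*d+e*f = 0"
  proof -
    have "real_of_int (2*(a*b+c*d+e*f)) = 0"
      using eq(2) unfolding A B C by (simp add: power2_eq_square algebra_simps)
    then show ?thesis by (simp only: of_int_eq_0_iff) simp
  qed
  have nc: "\<not>(even(a+b) \<and> even(c+d) \<and> even(e+f))"
  proof
    assume h: "even(a+b) \<and> even(c+d) \<and> even(e+f)"
    have "gdvd (1+\<i>) \<alpha>" using h dvd1i[of a b] A by simp
    moreover have "gdvd (1+\<i>) \<beta>" using h dvd1i[of c d] B by simp
    moreover have "gdvd (1+\<i>) \<gamma>" using h dvd1i[of e f] C by simp
    moreover have "1 + \<i> \<in> gauss_ints" unfolding gauss_ints_def by simp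
    ultimately have "1 + \<i> \<in> gunits" using assms(6) unfolding gcoprime3_def by blast
    then show False unfolding gunits_def by (auto simp: complex_eq_iff)
  qed
  define x where "x = a*c*e - a*d*f - b*c*f - b*d*e"
  define y where "y = a*c*f + a*d*e + b*c*e - b*d*f"
  have ev: "even x" "even y" using intcore[OF r i nc] unfolding x_def y_def by auto
  then obtain x' y' where x': "x = 2*x'" and y': "y = 2*y'" by blast
  have P: "\<alpha> * \<beta> * \<gamma> = Complex (of_int x) (of_int y)"
    unfolding A B C x_def y_def by (simp add: complex_eq_iff algebra_simps)
  have "\<alpha> * \<beta> * \<gamma> = (1 + \<i>)^2 * Complex (of_int y') (- of_int x')"
    unfolding P using x' y' by (simp add: complex_eq_iff power2_eq_square)
  moreover have "Complex (of_int y') (- of_int x') \<in> gauss_ints"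
    using gi_mk[of y' "-x'"] by simp
  ultimately show ?thesis unfolding gdvd_def by (rule bexI)
qed

end
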